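(* The Waterfilling Mechanism (with exact bucketing) described in the context satisfies the Sharing Incentive: for every nonempty finite set $S$ of analysts (each with workload $W_l$, weight $s_l>0$ and strategy $A_l$ satisfying $W_l=W_lA_l^+A_l$ with every column of $A_l$ of $L_1$ norm $1$) and every $i\in S$, $\mathrm{Err}_i(S)\le \mathrm{Err}_i(\{i\})$, i.e. analyst $i$'s expected error when all analysts in $S$ are served jointly with total budget $(\sum_{l\in S}s_l)\varepsilon$ is at most its expected error when served alone by the same mechanism with budget $s_i\varepsilon$.
   Context: Data are a vector $x\in\mathbb{R}^n$. Fix $\varepsilon>0$. Each analyst $l$ has a workload matrix $W_l$, a weight $s_l>0$ (entitled to budget $s_l\varepsilon$), and a strategy matrix $A_l$ chosen for $W_l$ alone by a selection step, with $W_l = W_lA_l^+A_l$ ($^+$ the Moore–Penrose pseudo-inverse) and every column of $A_l$ of $L_1$ norm $1$. Fix a norm $\|\cdot\|$ on row vectors. Waterfilling Mechanism for a collective $S$: maintain buckets $B$ (unit vectors $e$ with weights $f_B(e)>0$), initially empty; for each $l\in S$ and each nonzero row $v$ of $s_lA_l$, set $e=v/\|v\|$; if $e\in B$ increase $f_B(e)$ by $\|v\|$, else add $e$ with $f_B(e)=\|v\|$. The joint strategy $A$ has rows $f_B(e)e$, $e\in B$. With $\varepsilon_S=(\sum_{l\in S}s_l)\varepsilon$, release $y=Ax+\eta$, $\eta$ i.i.d. Laplace of scale $\|A\|_1/\varepsilon_S$ ($\|A\|_1$ = maximum column $L_1$ norm). Analyst $i$ estimates $W_ix$ by $W_iA^+y$,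 with expected error $\mathrm{Err}_i(S)=\frac{2\|A\|_1^2}{\varepsilon_S^2}\|W_iA^+\|_F^2$. *)

theory Defs
  imports Complex_Main "Jordan_Normal_Form.Matrix"
begin

definition pinv :: "real mat \<Rightarrow> real mat" where
  "pinv M = (THE X. X \<in> carrier_mat (dim_col M) (dim_row M) \<and>
       M * X * M = M \<and> X * M * X = X \<and>
       transpose_mat (M * X) = M * X \<and> transpose_mat (X * M) = X * M)"

definition is_norm_on :: "nat \<Rightarrow> (real vec \<Rightarrow> real) \<Rightarrow> bool" where
  "is_norm_on n nrm \<longleftrightarrow>
     (\<forall>v \<in> carrier_vec n. 0 \<le> nrm v \<and> (nrm v = 0 \<longleftrightarrow> v = 0\<^sub>v n)) \<and>
     (\<forall>v \<in> carrier_vec n. \<forall>c. nrm (c \<cdot>\<^sub>v v) = \<bar>c\<bar> * nrm v) \<and>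
     (\<forall>u \<in> carrier_vec n. \<forall>v \<in> carrier_vec n. nrm (u + v) \<le> nrm u + nrm v)"

text \<open>L1 norm of column j; induced 1-norm = maximum column L1 norm.\<close>
definition col_l1 :: "real mat \<Rightarrow> nat \<Rightarrow> real" where
  "col_l1 M j = (\<Sum>i<dim_row M. \<bar>M $$ (i, j)\<bar>)"

definition norm1 :: "real mat \<Rightarrow> real" where
  "norm1 M = Max (insert 0 {col_l1 M j | j. j < dim_col M})"

definition frob_sq :: "real mat \<Rightarrow> real" where
  "frob_sq M = (\<Sum>i<dim_row M. \<Sum>j<dim_col M. (M $$ (i, j))\<^sup>2)"

definition wf_row :: "('a \<Rightarrow> real) \<Rightarrow> ('a \<Rightarrow> real mat) \<Rightarrow> 'a \<times> nat \<Rightarrow> real vec" where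
  "wf_row s A p = row (s (fst p) \<cdot>\<^sub>m A (fst p)) (snd p)"

definition wf_idx :: "nat \<Rightarrow> ('a \<Rightarrow> real) \<Rightarrow> ('a \<Rightarrow> real mat) \<Rightarrow> 'a set \<Rightarrow> ('a \<times> nat) set" where
  "wf_idx n s A S = {(l, j). l \<in> S \<and> j < dim_row (A l) \<and> wf_row s A (l, j) \<noteq> 0\<^sub>v n}"

definition unit_dir :: "(real vec \<Rightarrow> real) \<Rightarrow> real vec \<Rightarrow> real vec" where
  "unit_dir nrm v = (1 / nrm v) \<cdot>\<^sub>v v"

definition wf_buckets :: "nat \<Rightarrow> (real vec \<Rightarrow> real) \<Rightarrow> ('a \<Rightarrow> real) \<Rightarrow> ('a \<Rightarrow> real mat) \<Rightarrow> 'a set \<Rightarrow> real vec set" where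
  "wf_buckets n nrm s A S = (\<lambda>p. unit_dir nrm (wf_row s A p)) ` wf_idx n s A S"

definition wf_weight :: "nat \<Rightarrow> (real vec \<Rightarrow> real) \<Rightarrow> ('a \<Rightarrow> real) \<Rightarrow> ('a \<Rightarrow> real mat) \<Rightarrow> 'a set \<Rightarrow> real vec \<Rightarrow> real" where
  "wf_weight n nrm s A S e =
     (\<Sum>p \<in> {p \<in> wf_idx n s A S. unit_dir nrm (wf_row s A p) = e}. nrm (wf_row s A p))"

definition wf_strategy :: "nat \<Rightarrow> (real vec \<Rightarrow> real) \<Rightarrow> ('a \<Rightarrow> real) \<Rightarrow> ('a \<Rightarrow> real mat) \<Rightarrow> 'a set \<Rightarrow> real mat" where
  "wf_strategy n nrm s A S =
     mat_of_rows n (map (\<lambda>e. wf_weight n nrm s A S e \<cdot>\<^sub>v e)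
       (SOME xs. distinct xs \<and> set xs = wf_buckets n nrm s A S))"

definition wf_err :: "nat \<Rightarrow> (real vec \<Rightarrow> real) \<Rightarrow> real \<Rightarrow> ('a \<Rightarrow> real mat) \<Rightarrow> ('a \<Rightarrow> real) \<Rightarrow> ('a \<Rightarrow> real mat) \<Rightarrow> 'a \<Rightarrow> 'a set \<Rightarrow> real" where
  "wf_err n nrm \<epsilon> W s A i S =
     (let AS = wf_strategy n nrm s A S; \<epsilon>S = (\<Sum>l\<in>S. s l) * \<epsilon>
      in 2 * (norm1 AS)\<^sup>2 / \<epsilon>S\<^sup>2 * frob_sq (W i * pinv AS))"

end

theory Submission
  imports Defs
begin

lemma sym_mat_vec_scalar:
  fixes M :: "real mat"
  assumes "M \<in> carrier_mat m m" "transpose_mat M = M" "u \<in> carrier_vec m" "v \<in> carrier_vec m"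
  shows "(M *\<^sub>v u) \<bullet> v = u \<bullet> (M *\<^sub>v v)"
  using transpose_vec_mult_scalar[OF assms(1) assms(4) assms(3)] assms(2) by simp

lemma self_scalar_pos:
  fixes c :: "real vec"
  assumes "c \<in> carrier_vec m" "c \<noteq> 0\<^sub>v m"
  shows "c \<bullet> c > 0"
proof -
  from assms obtain k where k: "k < m" "c $ k \<noteq> 0" by (metis eq_vecI carrier_vecD index_zero_vec)
  have "c \<bullet> c = (\<Sum>i\<in>{0..<m}. (c $ i)\<^sup>2)" using assms by (simp add: scalar_prod_def power2_eq_square)
  also have "\<dots> > 0"
    by (rule sum_pos2[of _ k]) (use k in auto)
  finally show ?thesis .
qed

lemma proj_exists:
  fixes A :: "real mat"
  shows "A \<in> carrier_mat m n \<Longrightarrow> \<exists>P Y. P \<in> carrier_mat m m \<and> Y \<in> carrier_mat n m \<and>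
     transpose_mat P = P \<and> P * A = A \<and> P = A * Y"
proof (induction n arbitrary: A)
  case 0
  show ?case
    apply (rule exI[of _ "0\<^sub>m m m"], rule exI[of _ "0\<^sub>m 0 m"])
    using 0 by (auto intro!: eq_matI simp: scalar_prod_def)
next
  case (Suc n)
  note A = Suc.prems
  define A' where "A' = mat m n (\<lambda>(i,j). A $$ (i, Suc j))"
  have A': "A' \<in> carrier_mat m n" unfolding A'_def by auto
  from Suc.IH[OF A'] obtain P' Y' where P': "P' \<in> carrier_mat m m" and Y': "Y' \<in> carrier_mat n m"
    and P'T: "transpose_mat P' = P'" and P'A: "P' * A' = A'" and P'Y: "P' = A' * Y'" by blast
  define S :: "real mat" where "S = mat (Suc n) n (\<lambda>(i,j). if i = Suc j then 1 else 0)"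
  have S: "S \<in> carrier_mat (Suc n) n" unfolding S_def by auto
  have AS: "A * S = A'"
  proof (rule eq_matI)
    fix i j assume i: "i < dim_row A'" and j: "j < dim_col A'"
    have "(A * S) $$ (i,j) = (\<Sum>k\<in>{0..<Suc n}. A $$ (i,k) * (if k = Suc j then 1 else 0))"
      using i j A A' S by (auto simp: scalar_prod_def S_def)
    also have "\<dots> = A $$ (i, Suc j)" using j A' by (simp add: if_distrib cong: if_cong)
    finally show "(A * S) $$ (i,j) = A' $$ (i,j)" using i j A' by (simp add: A'_def)
  qed (use A A' S in auto)
  define a where "a = col A 0"
  define e0 :: "real vec" where "e0 = unit_vec (Suc n) 0"
  have a: "a \<in> carrier_vec m" using A unfolding a_def by auto
  have e0: "e0 \<in> carrier_vec (Suc n)" unfolding e0_def by auto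
  have Ae0: "A *\<^sub>v e0 = a"
    by (rule eq_vecI) (use A in \<open>auto simp: e0_def a_def\<close>)
  have colA: "col A (Suc j) = col A' j" if "j < n" for j
    by (rule eq_vecI) (use A that in \<open>auto simp: A'_def\<close>)
  have PP: "P' * P' = P'"
  proof -
    have "P' * P' = P' * (A' * Y')" using P'Y by simp
    also have "\<dots> = (P' * A') * Y'" using P' A' Y' by simp
    finally show ?thesis using P'A P'Y by simp
  qed
  have P'col: "P' *\<^sub>v col A' j = col A' j" if "j < n" for j
    using col_mult2[OF P' A' that] P'A by simp
  define c where "c = a - P' *\<^sub>v a"
  have c: "c \<in> carrier_vec m" unfolding c_def using a P' by auto
  have P'a: "P' *\<^sub>v a \<in> carrier_vec m" using a P' by auto
  have aPPa: "(P' *\<^sub>v a) \<bullet> (P' *\<^sub>v a) = a \<bullet> (P' *\<^sub>v a)"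
  proof -
    have "(P' *\<^sub>v a) \<bullet> (P' *\<^sub>v a) = a \<bullet> (P' *\<^sub>v (P' *\<^sub>v a))"
      by (rule sym_mat_vec_scalar[OF P' P'T a P'a])
    also have "P' *\<^sub>v (P' *\<^sub>v a) = P' *\<^sub>v a" using PP P' a by (metis assoc_mult_mat_vec)
    finally show ?thesis .
  qed
  have cPa: "c \<bullet> (P' *\<^sub>v a) = 0"
    unfolding c_def using a P'a aPPa by (simp add: minus_scalar_prod_distrib)
  have ca: "c \<bullet> a = c \<bullet> c"
  proof -
    have "a = c + P' *\<^sub>v a" unfolding c_def using a P'a P' by (intro eq_vecI) auto
    hence "c \<bullet> a = c \<bullet> (c + P' *\<^sub>v a)" by simp
    also have "\<dots> = c \<bullet> c" using cPa c P'a by (simp add: scalar_prod_add_distrib)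
    finally show ?thesis .
  qed
  have cA': "c \<bullet> col A' j = 0" if "j < n" for j
  proof -
    have w: "col A' j \<in> carrier_vec m" using A' that by auto
    have "(P' *\<^sub>v a) \<bullet> col A' j = a \<bullet> (P' *\<^sub>v col A' j)"
      by (rule sym_mat_vec_scalar[OF P' P'T a w])
    thus ?thesis unfolding c_def using P'col[OF that] a P'a w by (simp add: minus_scalar_prod_distrib)
  qed
  define z where "z = e0 - S *\<^sub>v (Y' *\<^sub>v a)"
  have z: "z \<in> carrier_vec (Suc n)" unfolding z_def using e0 S Y' a by auto
  have Az: "A *\<^sub>v z = c"
  proof -
    have "A *\<^sub>v (S *\<^sub>v (Y' *\<^sub>v a)) = P' *\<^sub>v a"
      using A S Y' a AS P'Y A' by (metis assoc_mult_mat_vec mult_mat_vec_carrier)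
    thus ?thesis unfolding z_def c_def using A e0 S Y' a Ae0
      by (simp add: mult_minus_distrib_mat_vec)
  qed
  show ?case
  proof (cases "c = 0\<^sub>v m")
    case True
    show ?thesis
    proof (intro exI conjI)
      show "P' \<in> carrier_mat m m" by fact
      show "S * Y' \<in> carrier_mat (Suc n) m" using S Y' by auto
      show "transpose_mat P' = P'" by fact
      show "P' = A * (S * Y')" using P'Y AS assoc_mult_mat[OF A S Y'] by simp
      show "P' * A = A"
      proof (rule eq_matI)
        fix i j assume i: "i < dim_row A" and j: "j < dim_col A"
        have "col A j \<in> carrier_vec m" using A j by auto
        have "P' *\<^sub>v col A j = col A j"
        proof (cases j)
          case 0
          have "P' *\<^sub>v a = a"
          proof (rule eq_vecI)
            fix k assume "k < dim_vec a"
            hence k: "k < m" using a by auto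
            have "c $ k = 0" using True k by simp
            moreover have "(a - P' *\<^sub>v a) $ k = a $ k - (P' *\<^sub>v a) $ k"
              using k P' by (intro index_minus_vec) auto
            ultimately show "(P' *\<^sub>v a) $ k = a $ k" unfolding c_def by simp
          qed (use a P'a P' in auto)
          thus ?thesis using 0 unfolding a_def by simp
        next
          case (Suc j')
          hence j': "j' < n" using j A by auto
          show ?thesis unfolding Suc colA[OF j'] by (rule P'col[OF j'])
        qed
        hence "(P' *\<^sub>v col A j) $ i = col A j $ i" by simp
        thus "(P' * A) $$ (i, j) = A $$ (i, j)" using i j A P' by auto
      qed (use A P' in auto)
    qed
  next
    case False
    define g where "g = c \<bullet> c"
    have g: "g > 0" unfolding g_def by (rule self_scalar_pos[OF c False])
    define CC where "CC = mat m m (\<lambda>(i,j). c $ i * c $ j)"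
    define ZC where "ZC = mat (Suc n) m (\<lambda>(i,j). z $ i * c $ j)"
    have CC: "CC \<in> carrier_mat m m" unfolding CC_def by auto
    have ZC: "ZC \<in> carrier_mat (Suc n) m" unfolding ZC_def by auto
    have AZC: "A * ZC = CC"
    proof (rule eq_matI)
      fix i j assume i: "i < dim_row CC" and j: "j < dim_col CC"
      have "(A * ZC) $$ (i,j) = (\<Sum>k\<in>{0..<Suc n}. A $$ (i,k) * (z $ k * c $ j))"
        using i j A ZC CC by (auto simp: scalar_prod_def ZC_def)
      also have "\<dots> = (\<Sum>k\<in>{0..<Suc n}. A $$ (i,k) * z $ k) * c $ j"
        by (simp only: sum_distrib_right mult.assoc)
      also have "(\<Sum>k\<in>{0..<Suc n}. A $$ (i,k) * z $ k) = (A *\<^sub>v z) $ i"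
        using i A z CC by (auto simp: scalar_prod_def)
      finally show "(A * ZC) $$ (i,j) = CC $$ (i,j)" using i j CC Az by (simp add: CC_def)
    qed (use A ZC CC in auto)
    define P where "P = P' + (1/g) \<cdot>\<^sub>m CC"
    define Y where "Y = S * Y' + (1/g) \<cdot>\<^sub>m ZC"
    show ?thesis
    proof (intro exI conjI)
      show Pc: "P \<in> carrier_mat m m" using P' CC unfolding P_def by auto
      show "Y \<in> carrier_mat (Suc n) m" using S Y' ZC unfolding Y_def by auto
      show "transpose_mat P = P"
      proof (rule eq_matI)
        fix i j assume "i < dim_row P" "j < dim_col P"
        hence ij: "i < m" "j < m" using Pc by auto
        have "P' $$ (j, i) = P' $$ (i, j)" using P'T ij P'
          by (metis carrier_matD index_transpose_mat(1))
        thus "transpose_mat P $$ (i, j) = P $$ (i, j)" using ij P' CC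
          by (simp add: P_def CC_def)
      qed (use Pc in auto)
      show "P = A * Y"
      proof -
        have "A * Y = A * (S * Y') + A * ((1/g) \<cdot>\<^sub>m ZC)"
          unfolding Y_def by (rule mult_add_distrib_mat[OF A]) (use S Y' ZC in auto)
        also have "A * (S * Y') = P'" using P'Y AS assoc_mult_mat[OF A S Y'] by simp
        also have "A * ((1/g) \<cdot>\<^sub>m ZC) = (1/g) \<cdot>\<^sub>m CC" using mult_smult_distrib[OF A ZC] AZC by simp
        finally show ?thesis unfolding P_def by simp
      qed
      show "P * A = A"
      proof (rule eq_matI)
        fix i j assume i: "i < dim_row A" and j: "j < dim_col A"
        have im: "i < m" and jn: "j < Suc n" using i j A by auto
        define w where "w = col A j"
        have w: "w \<in> carrier_vec m" using A j unfolding w_def by auto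
        have Pw: "P' *\<^sub>v w \<in> carrier_vec m" using P' w by auto
        have key: "P' *\<^sub>v w + ((c \<bullet> w) / g) \<cdot>\<^sub>v c = w"
        proof (cases j)
          case 0
          hence "w = a" unfolding w_def a_def by simp
          hence cw: "(c \<bullet> w) / g = 1" using ca g unfolding g_def by simp
          show ?thesis unfolding cw
          proof (rule eq_vecI)
            fix k assume "k < dim_vec w"
            hence k: "k < m" using w by auto
            have "c $ k = a $ k - (P' *\<^sub>v a) $ k" unfolding c_def using k P' by (intro index_minus_vec) auto
            thus "(P' *\<^sub>v w + 1 \<cdot>\<^sub>v c) $ k = w $ k" using k c Pw \<open>w = a\<close> by simp
          qed (use c Pw w in auto)
        next
          case (Suc j')
          hence j': "j' < n" using jn by auto
          have ww: "w = col A' j'" unfolding w_def Suc using colA[OF j'] .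
          have cw: "c \<bullet> w = 0" unfolding ww by (rule cA'[OF j'])
          have Pw': "P' *\<^sub>v w = w" unfolding ww by (rule P'col[OF j'])
          show ?thesis unfolding cw Pw'
            by (rule eq_vecI) (use w c in auto)
        qed
        have "(P * A) $$ (i, j) = (\<Sum>k\<in>{0..<m}. P $$ (i,k) * w $ k)"
          using im j A Pc w by (simp add: scalar_prod_def w_def)
        also have "\<dots> = (\<Sum>k\<in>{0..<m}. P' $$ (i,k) * w $ k + (c $ i / g) * (c $ k * w $ k))"
          by (rule sum.cong) (use im P' CC in \<open>auto simp: P_def CC_def algebra_simps\<close>)
        also have "\<dots> = (\<Sum>k\<in>{0..<m}. P' $$ (i,k) * w $ k) + (c $ i / g) * (\<Sum>k\<in>{0..<m}. c $ k * w $ k)"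
          by (simp add: sum.distrib sum_distrib_left)
        also have "(\<Sum>k\<in>{0..<m}. P' $$ (i,k) * w $ k) = (P' *\<^sub>v w) $ i"
          using im P' w by (simp add: scalar_prod_def)
        also have "(\<Sum>k\<in>{0..<m}. c $ k * w $ k) = c \<bullet> w"
          using w by (simp add: scalar_prod_def)
        also have "(P' *\<^sub>v w) $ i + c $ i / g * (c \<bullet> w) = (P' *\<^sub>v w + ((c \<bullet> w) / g) \<cdot>\<^sub>v c) $ i"
          using im c Pw by simp
        also have "\<dots> = w $ i" using key by simp
        finally show "(P * A) $$ (i, j) = A $$ (i, j)" using im j A unfolding w_def by simp
      qed (use A Pc in auto)
    qed
  qed
qed
lemma assoc4:
  fixes A :: "real mat"
  assumes "A \<in> carrier_mat n1 n2" "B \<in> carrier_mat n2 n3" "C \<in> carrier_mat n3 n4" "D \<in> carrier_mat n4 n5"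
  shows "A * B * C * D = A * (B * C * D)"
proof -
  have "A * B * C = A * (B * C)" using assms by simp
  hence "A * B * C * D = A * (B * C) * D" by simp
  also have "\<dots> = A * (B * C * D)"
    using assoc_mult_mat[of A n1 n2 "B * C" n4 D n5] assms by simp
  finally show ?thesis .
qed

definition penrose :: "real mat \<Rightarrow> real mat \<Rightarrow> bool" where
  "penrose M X \<longleftrightarrow> X \<in> carrier_mat (dim_col M) (dim_row M) \<and>
       M * X * M = M \<and> X * M * X = X \<and>
       transpose_mat (M * X) = M * X \<and> transpose_mat (X * M) = X * M"

lemma penrose_exists:
  fixes A :: "real mat"
  assumes A: "A \<in> carrier_mat m n"
  shows "\<exists>X. penrose A X"
proof -
  obtain P Y where P: "P \<in> carrier_mat m m" and Y: "Y \<in> carrier_mat n m"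
    and PT: "transpose_mat P = P" and PA: "P * A = A" and PY: "P = A * Y"
    using proj_exists[OF A] by blast
  have AT: "transpose_mat A \<in> carrier_mat n m" using A by simp
  obtain R Z where R: "R \<in> carrier_mat n n" and Z: "Z \<in> carrier_mat m n"
    and RT: "transpose_mat R = R" and RA: "R * transpose_mat A = transpose_mat A" and RZ: "R = transpose_mat A * Z"
    using proj_exists[OF AT] by blast
  have AR: "A * R = A"
  proof -
    have "transpose_mat (R * transpose_mat A) = A * transpose_mat R"
      using transpose_mult[OF R AT] by simp
    thus ?thesis using RA RT by simp
  qed
  have RZ': "R = transpose_mat Z * A"
  proof -
    have "R = transpose_mat R" using RT by simp
    also have "\<dots> = transpose_mat Z * A" unfolding RZ using transpose_mult[OF AT Z] by simp
    finally show ?thesis .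
  qed
  have PP: "P * P = P"
  proof -
    have "P * P = P * (A * Y)" using PY by simp
    also have "\<dots> = (P * A) * Y" using P A Y by simp
    finally show ?thesis using PA PY by simp
  qed
  have RR: "R * R = R"
  proof -
    have "R * R = R * (transpose_mat A * Z)" using RZ by simp
    also have "\<dots> = (R * transpose_mat A) * Z" using R AT Z by simp
    finally show ?thesis using RA RZ by simp
  qed
  define X where "X = R * Y * P"
  have X: "X \<in> carrier_mat n m" unfolding X_def using R Y P by auto
  have AX: "A * X = P"
  proof -
    have "A * X = A * (R * (Y * P))" unfolding X_def using R Y P by simp
    also have "\<dots> = (A * R) * (Y * P)" using A R Y P by (simp add: assoc_mult_mat[symmetric, of A m n R n "Y * P" m])
    also have "\<dots> = (A * Y) * P" using AR A Y P by simp
    finally show ?thesis using PY PP by simp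
  qed
  have XA: "X * A = R"
  proof -
    have "X * A = R * Y * (P * A)" unfolding X_def
      using assoc_mult_mat[of "R * Y" n m P m A n] R Y P A by simp
    also have "\<dots> = transpose_mat Z * A * Y * A" using PA RZ' by simp
    also have "\<dots> = transpose_mat Z * ((A * Y) * A)"
      by (rule assoc4) (use Z A Y in auto)
    also have "\<dots> = R" using PY PA RZ' by simp
    finally show ?thesis .
  qed
  show ?thesis unfolding penrose_def
  proof (intro exI conjI)
    show "X \<in> carrier_mat (dim_col A) (dim_row A)" using X A by simp
    show "A * X * A = A" using AX PA by simp
    show "X * A * X = X"
    proof -
      have "X * A * X = R * X" using XA by simp
      also have "\<dots> = (R * R) * Y * P" unfolding X_def using assoc4[OF R R Y P] by simp
      finally show ?thesis using RR X_def by simp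
    qed
    show "transpose_mat (A * X) = A * X" using AX PT by simp
    show "transpose_mat (X * A) = X * A" using XA RT by simp
  qed
qed

lemma penrose_unique:
  fixes A :: "real mat"
  assumes A: "A \<in> carrier_mat m n" and X: "penrose A X" and X': "penrose A X'"
  shows "X = X'"
proof -
  have Xc: "X \<in> carrier_mat n m" and Xc': "X' \<in> carrier_mat n m" using X X' A unfolding penrose_def by auto
  have AT: "transpose_mat A \<in> carrier_mat n m" using A by simp
  have XT: "transpose_mat X \<in> carrier_mat m n" and XT': "transpose_mat X' \<in> carrier_mat m n" using Xc Xc' by auto
  note p = X[unfolded penrose_def] X'[unfolded penrose_def]
  have AAX: "transpose_mat A = transpose_mat A * A * X'"
  proof -
    have "transpose_mat A = transpose_mat (A * X' * A)" using p by simp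
    also have "\<dots> = transpose_mat A * transpose_mat (A * X')"
      using transpose_mult[of "A * X'" m m A n] A Xc' by simp
    also have "\<dots> = transpose_mat A * (A * X')" using p by simp
    finally show ?thesis using AT A Xc' by simp
  qed
  have AXA: "transpose_mat A = X * A * transpose_mat A"
  proof -
    have "transpose_mat A = transpose_mat (A * X * A)" using p by simp
    also have "\<dots> = transpose_mat (X * A) * transpose_mat A"
      using transpose_mult[of A m n "X * A" n] A Xc by (simp add: assoc_mult_mat[of A m n X m A n])
    also have "\<dots> = X * A * transpose_mat A" using p by simp
    finally show ?thesis .
  qed
  have XXA: "X = X * transpose_mat X * transpose_mat A"
  proof -
    have "X = X * (A * X)" using p A Xc by (simp add: assoc_mult_mat[of X n m A n X m])
    also have "\<dots> = X * transpose_mat (A * X)" using p by simp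
    also have "\<dots> = X * (transpose_mat X * transpose_mat A)" using transpose_mult[OF A Xc] by simp
    finally show ?thesis using Xc XT AT by simp
  qed
  have XAX': "X' = transpose_mat A * transpose_mat X' * X'"
  proof -
    have "X' = (X' * A) * X'" using p by simp
    also have "\<dots> = transpose_mat (X' * A) * X'" using p by simp
    also have "\<dots> = (transpose_mat A * transpose_mat X') * X'" using transpose_mult[OF Xc' A] by simp
    finally show ?thesis .
  qed
  have "X = X * transpose_mat X * (transpose_mat A * A * X')" using XXA AAX by simp
  also have "\<dots> = (X * transpose_mat X * transpose_mat A) * A * X'"
  proof -
    have c1: "X * transpose_mat X \<in> carrier_mat n n" using Xc XT by simp
    have "X * transpose_mat X * (transpose_mat A * A * X') = X * transpose_mat X * (transpose_mat A * (A * X'))"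
      using AT A Xc' by simp
    also have "\<dots> = (X * transpose_mat X) * transpose_mat A * (A * X')"
      using assoc_mult_mat[OF c1 AT, of "A * X'" m] A Xc' by simp
    also have "\<dots> = (X * transpose_mat X * transpose_mat A) * A * X'"
      using assoc_mult_mat[of "X * transpose_mat X * transpose_mat A" n m A n X' m] c1 AT A Xc' by simp
    finally show ?thesis .
  qed
  also have "\<dots> = X * A * X'" using XXA by simp
  finally have 1: "X = X * A * X'" .
  have "X' = (X * A * transpose_mat A) * transpose_mat X' * X'" using XAX' AXA by simp
  also have "\<dots> = X * A * (transpose_mat A * transpose_mat X' * X')"
    by (rule assoc4[of "X * A" n n]) (use Xc XT' AT A Xc' in auto)
  also have "\<dots> = X * A * X'" using XAX' by simp
  finally show ?thesis using 1 by simp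
qed

lemma pinv_penrose:
  fixes A :: "real mat"
  shows "penrose A (pinv A)"
proof -
  have A: "A \<in> carrier_mat (dim_row A) (dim_col A)" by auto
  obtain X where X: "penrose A X" using penrose_exists[OF A] by blast
  have "penrose A (THE X. penrose A X)"
    by (rule theI[of "penrose A" X]) (use X penrose_unique[OF A] in auto)
  thus ?thesis unfolding pinv_def penrose_def[abs_def] by simp
qed

lemma proj_vec_le:
  fixes P :: "real mat"
  assumes P: "P \<in> carrier_mat m m" and PT: "transpose_mat P = P" and PP: "P * P = P"
    and y: "y \<in> carrier_vec m"
  shows "(P *\<^sub>v y) \<bullet> (P *\<^sub>v y) \<le> y \<bullet> y"
proof -
  define u where "u = P *\<^sub>v y"
  have u: "u \<in> carrier_vec m" unfolding u_def using P y by auto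
  have "u \<bullet> u = y \<bullet> (P *\<^sub>v u)" unfolding u_def by (rule sym_mat_vec_scalar[OF P PT y]) (use P y in auto)
  also have "P *\<^sub>v u = u" unfolding u_def using assoc_mult_mat_vec[OF P P y] PP by simp
  finally have uu: "u \<bullet> u = y \<bullet> u" .
  have yu: "u \<bullet> y = y \<bullet> u" using comm_scalar_prod[OF u y] .
  have "0 \<le> (y - u) \<bullet> (y - u)"
    using y u by (simp add: scalar_prod_def sum_nonneg)
  also have "(y - u) \<bullet> (y - u) = y \<bullet> y - u \<bullet> y - (y \<bullet> u - u \<bullet> u)"
    using y u by (simp add: minus_scalar_prod_distrib scalar_prod_minus_distrib)
  finally show ?thesis using uu yu unfolding u_def by simp
qed

lemma frob_sq_proj_le:
  fixes P Y :: "real mat"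
  assumes P: "P \<in> carrier_mat m m" and PT: "transpose_mat P = P" and PP: "P * P = P"
    and Y: "Y \<in> carrier_mat k m"
  shows "frob_sq (Y * P) \<le> frob_sq Y"
proof -
  have rowle: "(\<Sum>j<m. ((Y * P) $$ (i, j))\<^sup>2) \<le> (\<Sum>j<m. (Y $$ (i, j))\<^sup>2)" if i: "i < k" for i
  proof -
    define y where "y = row Y i"
    have y: "y \<in> carrier_vec m" unfolding y_def using Y by auto
    have e: "(Y * P) $$ (i, j) = (P *\<^sub>v y) $ j" if j: "j < m" for j
    proof -
      have "(Y * P) $$ (i, j) = y \<bullet> col P j" using i j Y P unfolding y_def by simp
      also have "\<dots> = col P j \<bullet> y" using comm_scalar_prod[OF _ y, of "col P j"] P j by simp
      also have "col P j = row P j"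
        using PT P j by (metis carrier_matD(2) row_transpose)
      finally show ?thesis using j P by simp
    qed
    have "(\<Sum>j<m. ((Y * P) $$ (i, j))\<^sup>2) = (P *\<^sub>v y) \<bullet> (P *\<^sub>v y)"
      using e P by (simp add: scalar_prod_def power2_eq_square lessThan_atLeast0)
    also have "\<dots> \<le> y \<bullet> y" by (rule proj_vec_le[OF P PT PP y])
    also have "y \<bullet> y = (\<Sum>j<m. (Y $$ (i, j))\<^sup>2)"
      using y i Y unfolding y_def by (simp add: scalar_prod_def power2_eq_square lessThan_atLeast0)
    finally show ?thesis .
  qed
  have "frob_sq (Y * P) = (\<Sum>i<k. \<Sum>j<m. ((Y * P) $$ (i, j))\<^sup>2)"
    unfolding frob_sq_def using Y P by simp
  also have "\<dots> \<le> (\<Sum>i<k. \<Sum>j<m. (Y $$ (i, j))\<^sup>2)"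
    by (rule sum_mono) (use rowle in auto)
  also have "\<dots> = frob_sq Y" unfolding frob_sq_def using Y by simp
  finally show ?thesis .
qed

lemma pinv_carrier: "pinv A \<in> carrier_mat (dim_col A) (dim_row A)"
  using pinv_penrose[of A] unfolding penrose_def by simp

lemma min_norm:
  fixes A W Y :: "real mat"
  assumes A: "A \<in> carrier_mat m n" and Y: "Y \<in> carrier_mat k m" and W: "W = Y * A"
  shows "frob_sq (W * pinv A) \<le> frob_sq Y"
proof -
  define X where "X = pinv A"
  have X: "X \<in> carrier_mat n m" using pinv_carrier[of A] A unfolding X_def by simp
  have pen: "A * X * A = A" "transpose_mat (A * X) = A * X"
    using pinv_penrose[of A] unfolding X_def penrose_def by auto
  define P where "P = A * X"
  have P: "P \<in> carrier_mat m m" unfolding P_def using A X by simp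
  have AX: "A * X \<in> carrier_mat m m" using A X by simp
  have PP: "P * P = P" unfolding P_def using pen assoc_mult_mat[OF AX A X, symmetric] by simp
  have "W * X = Y * P" unfolding W P_def using assoc_mult_mat[OF Y A X] by simp
  hence "frob_sq (W * pinv A) = frob_sq (Y * P)" unfolding X_def by simp
  also have "\<dots> \<le> frob_sq Y" by (rule frob_sq_proj_le[OF P _ PP Y]) (use pen P_def in simp)
  finally show ?thesis .
qed

lemma pinv_reproduce:
  fixes A W Z :: "real mat"
  assumes A: "A \<in> carrier_mat m n" and Z: "Z \<in> carrier_mat k m" and W: "W = Z * A"
  shows "W * pinv A * A = W"
proof -
  define X where "X = pinv A"
  have X: "X \<in> carrier_mat n m" using pinv_carrier[of A] A unfolding X_def by simp
  have pen: "A * X * A = A"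
    using pinv_penrose[of A] unfolding X_def penrose_def by auto
  have "W * X * A = Z * (A * X * A)" unfolding W using assoc4[OF Z A X A] by simp
  thus ?thesis using pen W X_def by simp
qed


lemma sum_nth_distinct:
  assumes "distinct xs"
  shows "(\<Sum>k<length xs. g (xs ! k)) = sum g (set xs)"
proof -
  have "inj_on (nth xs) {..<length xs}" by (rule inj_on_nth) (use assms in auto)
  moreover have "nth xs ` {..<length xs} = set xs" by (auto simp: in_set_conv_nth)
  ultimately show ?thesis using sum.reindex[of "nth xs" "{..<length xs}" g] by simp
qed

lemma sum_nth_single:
  assumes "distinct xs" "e \<in> set xs"
  shows "(\<Sum>k<length xs. if xs ! k = e then h k else 0) = h (the_inv_into {..<length xs} (nth xs) e)"
proof -
  define k0 where "k0 = the_inv_into {..<length xs} (nth xs) e"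
  have inj: "inj_on (nth xs) {..<length xs}" by (rule inj_on_nth) (use assms in auto)
  obtain k1 where k1: "k1 < length xs" "xs ! k1 = e" using assms by (auto simp: in_set_conv_nth)
  have k0: "k0 = k1" unfolding k0_def using the_inv_into_f_f[OF inj] k1 by auto
  have "(\<Sum>k<length xs. if xs ! k = e then h k else 0) = (\<Sum>k<length xs. if k = k0 then h k else 0)"
  proof (rule sum.cong)
    fix k assume "k \<in> {..<length xs}"
    hence "xs ! k = e \<longleftrightarrow> k = k0" using k1 k0 assms(1) nth_eq_iff_index_eq by auto
    thus "(if xs ! k = e then h k else 0) = (if k = k0 then h k else 0)" by simp
  qed simp
  also have "\<dots> = h k0" using k1 k0 by simp
  finally show ?thesis unfolding k0_def .
qed

lemma sum_nth_single':
  assumes "distinct xs" "k0 < length xs" "xs ! k0 = e"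
  shows "(\<Sum>k<length xs. if xs ! k = e then h k else 0) = h k0"
proof -
  have "(\<Sum>k<length xs. if xs ! k = e then h k else 0) = (\<Sum>k<length xs. if k = k0 then h k else 0)"
  proof (rule sum.cong)
    fix k assume "k \<in> {..<length xs}"
    hence "xs ! k = e \<longleftrightarrow> k = k0" using assms nth_eq_iff_index_eq by auto
    thus "(if xs ! k = e then h k else 0) = (if k = k0 then h k else 0)" by simp
  qed simp
  also have "\<dots> = h k0" using assms by simp
  finally show ?thesis .
qed

lemma sum_nth_sub:
  assumes "distinct xs" "distinct ys" "set xs \<subseteq> set ys"
  shows "(\<Sum>k<length ys. if ys ! k \<in> set xs then G (ys ! k) else 0) = (\<Sum>k<length xs. G (xs ! k))"
proof -
  have "(\<Sum>k<length ys. if ys ! k \<in> set xs then G (ys ! k) else 0) = (\<Sum>e\<in>set ys. if e \<in> set xs then G e else 0)"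
    by (rule sum_nth_distinct[OF assms(2)])
  also have "\<dots> = sum G (set ys \<inter> set xs)" by (simp add: sum.inter_restrict)
  also have "set ys \<inter> set xs = set xs" using assms(3) by auto
  also have "sum G (set xs) = (\<Sum>k<length xs. G (xs ! k))" by (rule sum_nth_distinct[OF assms(1), symmetric])
  finally show ?thesis .
qed

context
  fixes n :: nat and nrm :: "real vec \<Rightarrow> real" and s :: "'a \<Rightarrow> real" and A :: "'a \<Rightarrow> real mat"
    and S :: "'a set"
  assumes norm: "is_norm_on n nrm" and fin: "finite S" and spos: "\<And>l. l \<in> S \<Longrightarrow> s l > 0"
    and dimA: "\<And>l. l \<in> S \<Longrightarrow> dim_col (A l) = n"
begin

lemma wf_row_carrier: "l \<in> S \<Longrightarrow> wf_row s A (l, j) \<in> carrier_vec n"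
  using dimA unfolding wf_row_def by (auto simp: row_def)

lemma wf_row_index: "l \<in> S \<Longrightarrow> j < dim_row (A l) \<Longrightarrow> c < n \<Longrightarrow> wf_row s A (l, j) $ c = s l * A l $$ (j, c)"
  using dimA unfolding wf_row_def by simp

lemma idx_fin: "T \<subseteq> S \<Longrightarrow> finite (wf_idx n s A T)"
proof -
  assume T: "T \<subseteq> S"
  have "wf_idx n s A T \<subseteq> Sigma T (\<lambda>l. {..<dim_row (A l)})" unfolding wf_idx_def by auto
  moreover have "finite (Sigma T (\<lambda>l. {..<dim_row (A l)}))" using T fin finite_subset by blast
  ultimately show ?thesis using finite_subset by blast
qed

lemma idx_mono: "T \<subseteq> T' \<Longrightarrow> wf_idx n s A T \<subseteq> wf_idx n s A T'"
  unfolding wf_idx_def by auto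

lemma idx_props:
  assumes T: "T \<subseteq> S" and p: "p \<in> wf_idx n s A T"
  shows "nrm (wf_row s A p) > 0" "wf_row s A p = nrm (wf_row s A p) \<cdot>\<^sub>v unit_dir nrm (wf_row s A p)"
    "unit_dir nrm (wf_row s A p) \<in> carrier_vec n" "fst p \<in> S" "wf_row s A p \<in> carrier_vec n"
proof -
  obtain l j where pl: "p = (l, j)" by (cases p)
  have l: "l \<in> S" and nz: "wf_row s A p \<noteq> 0\<^sub>v n" using p T unfolding wf_idx_def pl by auto
  have v: "wf_row s A p \<in> carrier_vec n" using wf_row_carrier[OF l] pl by simp
  have "nrm (wf_row s A p) \<ge> 0" "nrm (wf_row s A p) \<noteq> 0" using norm v nz unfolding is_norm_on_def by auto
  thus pos: "nrm (wf_row s A p) > 0" by simp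
  show "wf_row s A p = nrm (wf_row s A p) \<cdot>\<^sub>v unit_dir nrm (wf_row s A p)"
    unfolding unit_dir_def smult_smult_assoc using pos by simp
  show "unit_dir nrm (wf_row s A p) \<in> carrier_vec n" unfolding unit_dir_def using v by simp
  show "fst p \<in> S" using l pl by simp
  show "wf_row s A p \<in> carrier_vec n" by fact
qed

definition xsl :: "'a set \<Rightarrow> real vec list" where
  "xsl T = (SOME xs. distinct xs \<and> set xs = wf_buckets n nrm s A T)"

lemma xsl_props:
  assumes T: "T \<subseteq> S"
  shows "distinct (xsl T)" "set (xsl T) = wf_buckets n nrm s A T"
proof -
  have "finite (wf_buckets n nrm s A T)" unfolding wf_buckets_def using idx_fin[OF T] by simp
  then obtain xs where "set xs = wf_buckets n nrm s A T \<and> distinct xs" using finite_distinct_list by blast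
  hence "distinct (xsl T) \<and> set (xsl T) = wf_buckets n nrm s A T"
    unfolding xsl_def using someI_ex[of "\<lambda>xs. distinct xs \<and> set xs = wf_buckets n nrm s A T"] by blast
  thus "distinct (xsl T)" "set (xsl T) = wf_buckets n nrm s A T" by auto
qed

lemma bucket_carrier: "T \<subseteq> S \<Longrightarrow> e \<in> wf_buckets n nrm s A T \<Longrightarrow> e \<in> carrier_vec n"
  unfolding wf_buckets_def using idx_props(3) by blast

lemma weight_pos:
  assumes T: "T \<subseteq> S" and e: "e \<in> wf_buckets n nrm s A T"
  shows "wf_weight n nrm s A T e > 0"
proof -
  obtain p where p: "p \<in> wf_idx n s A T" "unit_dir nrm (wf_row s A p) = e" using e unfolding wf_buckets_def by auto
  show ?thesis unfolding wf_weight_def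
    by (rule sum_pos2[of _ p]) (use p idx_fin[OF T] idx_props[OF T] in \<open>auto simp: less_imp_le\<close>)
qed

lemma weight_mono:
  assumes T: "T \<subseteq> T'" "T' \<subseteq> S"
  shows "wf_weight n nrm s A T e \<le> wf_weight n nrm s A T' e"
  unfolding wf_weight_def
  by (rule sum_mono2) (use idx_fin[OF T(2)] idx_mono[OF T(1)] idx_props[OF T(2)] in \<open>auto simp: less_imp_le\<close>)

lemma strat_eq: "wf_strategy n nrm s A T = mat_of_rows n (map (\<lambda>e. wf_weight n nrm s A T e \<cdot>\<^sub>v e) (xsl T))"
  unfolding wf_strategy_def xsl_def by simp

lemma strat_carrier: "wf_strategy n nrm s A T \<in> carrier_mat (length (xsl T)) n"
  unfolding strat_eq by (metis length_map mat_of_rows_carrier(1))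

lemma strat_index:
  assumes T: "T \<subseteq> S" and k: "k < length (xsl T)" and c: "c < n"
  shows "wf_strategy n nrm s A T $$ (k, c) = wf_weight n nrm s A T (xsl T ! k) * (xsl T ! k) $ c"
proof -
  have "xsl T ! k \<in> carrier_vec n" using bucket_carrier[OF T] xsl_props[OF T] k nth_mem by blast
  thus ?thesis unfolding strat_eq using k c by (simp add: mat_of_rows_index)
qed

lemma col_l1_strat:
  assumes T: "T \<subseteq> S" and c: "c < n" and one: "\<And>l. l \<in> T \<Longrightarrow> col_l1 (A l) c = 1"
  shows "col_l1 (wf_strategy n nrm s A T) c = (\<Sum>l\<in>T. s l)"
proof -
  let ?M = "wf_strategy n nrm s A T"
  let ?xs = "xsl T"
  let ?I = "wf_idx n s A T"
  let ?B = "wf_buckets n nrm s A T"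
  let ?v = "wf_row s A"
  let ?d = "\<lambda>p. unit_dir nrm (wf_row s A p)"
  let ?f = "wf_weight n nrm s A T"
  have "col_l1 ?M c = (\<Sum>k<length ?xs. \<bar>?f (?xs ! k) * (?xs ! k) $ c\<bar>)"
    unfolding col_l1_def using strat_carrier[of T] strat_index[OF T _ c] by (intro sum.cong) auto
  also have "\<dots> = (\<Sum>e\<in>?B. \<bar>?f e * e $ c\<bar>)"
    using sum_nth_distinct[OF xsl_props(1)[OF T], of "\<lambda>e. \<bar>?f e * e $ c\<bar>"] xsl_props(2)[OF T] by simp
  also have "\<dots> = (\<Sum>e\<in>?B. \<Sum>p\<in>{p \<in> ?I. ?d p = e}. \<bar>?v p $ c\<bar>)"
  proof (rule sum.cong)
    fix e assume e: "e \<in> ?B"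
    have "\<bar>?f e * e $ c\<bar> = ?f e * \<bar>e $ c\<bar>" using weight_pos[OF T e] by (simp add: abs_mult)
    also have "\<dots> = (\<Sum>p\<in>{p \<in> ?I. ?d p = e}. nrm (?v p) * \<bar>e $ c\<bar>)"
      unfolding wf_weight_def by (simp add: sum_distrib_right)
    also have "\<dots> = (\<Sum>p\<in>{p \<in> ?I. ?d p = e}. \<bar>?v p $ c\<bar>)"
    proof (rule sum.cong)
      fix p assume p: "p \<in> {p \<in> ?I. ?d p = e}"
      hence pI: "p \<in> ?I" and pe: "?d p = e" by auto
      have "?v p $ c = (nrm (?v p) \<cdot>\<^sub>v ?d p) $ c" using idx_props(2)[OF T pI] by simp
      also have "\<dots> = nrm (?v p) * e $ c" using idx_props(3)[OF T pI] c pe by simp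
      finally show "nrm (?v p) * \<bar>e $ c\<bar> = \<bar>?v p $ c\<bar>"
        using idx_props(1)[OF T pI] by (simp add: abs_mult)
    qed simp
    finally show "\<bar>?f e * e $ c\<bar> = (\<Sum>p\<in>{p \<in> ?I. ?d p = e}. \<bar>?v p $ c\<bar>)" .
  qed simp
  also have "\<dots> = (\<Sum>p\<in>?I. \<bar>?v p $ c\<bar>)"
    unfolding wf_buckets_def by (rule sum.image_gen[symmetric]) (rule idx_fin[OF T])
  also have "\<dots> = (\<Sum>p\<in>Sigma T (\<lambda>l. {..<dim_row (A l)}). \<bar>?v p $ c\<bar>)"
  proof (rule sum.mono_neutral_left)
    show "finite (Sigma T (\<lambda>l. {..<dim_row (A l)}))" using T fin finite_subset by blast
    show "?I \<subseteq> Sigma T (\<lambda>l. {..<dim_row (A l)})" unfolding wf_idx_def by auto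
    show "\<forall>p\<in>Sigma T (\<lambda>l. {..<dim_row (A l)}) - ?I. \<bar>?v p $ c\<bar> = 0"
    proof
      fix p assume "p \<in> Sigma T (\<lambda>l. {..<dim_row (A l)}) - ?I"
      hence "?v p = 0\<^sub>v n" unfolding wf_idx_def by auto
      thus "\<bar>?v p $ c\<bar> = 0" using c by simp
    qed
  qed
  also have "\<dots> = (\<Sum>l\<in>T. \<Sum>j<dim_row (A l). \<bar>?v (l, j) $ c\<bar>)"
    using sum.Sigma[of T "\<lambda>l. {..<dim_row (A l)}" "\<lambda>l j. \<bar>?v (l, j) $ c\<bar>"] finite_subset[OF T fin]
    by (simp add: case_prod_beta')
  also have "\<dots> = (\<Sum>l\<in>T. \<Sum>j<dim_row (A l). \<bar>s l * A l $$ (j, c)\<bar>)"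
    using wf_row_index subsetD[OF T] c by (intro sum.cong refl) auto
  also have "\<dots> = (\<Sum>l\<in>T. s l * col_l1 (A l) c)"
    unfolding col_l1_def using spos T
    by (intro sum.cong refl) (auto simp: abs_mult sum_distrib_left less_imp_le)
  also have "\<dots> = (\<Sum>l\<in>T. s l)" using one by simp
  finally show ?thesis .
qed

lemma norm1_strat:
  assumes T: "T \<subseteq> S" and n: "n > 0" and one: "\<And>l c. l \<in> T \<Longrightarrow> c < n \<Longrightarrow> col_l1 (A l) c = 1"
  shows "norm1 (wf_strategy n nrm s A T) = (\<Sum>l\<in>T. s l)"
proof -
  have h: "col_l1 (wf_strategy n nrm s A T) j = (\<Sum>l\<in>T. s l)" if "j < n" for j
    using col_l1_strat[OF T that] one that by blast
  have "{col_l1 (wf_strategy n nrm s A T) j | j. j < dim_col (wf_strategy n nrm s A T)} = {\<Sum>l\<in>T. s l}"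
  proof (intro Set.set_eqI iffI)
    fix x assume "x \<in> {col_l1 (wf_strategy n nrm s A T) j | j. j < dim_col (wf_strategy n nrm s A T)}"
    then obtain j where "x = col_l1 (wf_strategy n nrm s A T) j" "j < n" using strat_carrier[of T] by auto
    thus "x \<in> {\<Sum>l\<in>T. s l}" using h by simp
  next
    fix x assume "x \<in> {\<Sum>l\<in>T. s l}"
    hence "x = col_l1 (wf_strategy n nrm s A T) 0 \<and> 0 < dim_col (wf_strategy n nrm s A T)"
      using h[OF n] strat_carrier[of T] n by simp
    thus "x \<in> {col_l1 (wf_strategy n nrm s A T) j | j. j < dim_col (wf_strategy n nrm s A T)}" by blast
  qed
  moreover have "(\<Sum>l\<in>T. s l) \<ge> 0" using spos T by (simp add: sum_nonneg less_imp_le subset_iff)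
  ultimately show ?thesis unfolding norm1_def by simp
qed

lemma single_factor:
  assumes i: "i \<in> S"
  shows "\<exists>T. T \<in> carrier_mat (dim_row (A i)) (length (xsl {i})) \<and> A i = T * wf_strategy n nrm s A {i}"
proof -
  have Ti: "{i} \<subseteq> S" using i by simp
  let ?xs = "xsl {i}"
  let ?I = "wf_idx n s A {i}"
  let ?v = "wf_row s A"
  let ?d = "\<lambda>p. unit_dir nrm (wf_row s A p)"
  let ?f = "wf_weight n nrm s A {i}"
  let ?Ai = "wf_strategy n nrm s A {i}"
  define T where "T = mat (dim_row (A i)) (length ?xs) (\<lambda>(j,k). if (i,j) \<in> ?I \<and> ?xs ! k = ?d (i,j)
      then nrm (?v (i,j)) / (s i * ?f (?d (i,j))) else 0)"
  have Tc: "T \<in> carrier_mat (dim_row (A i)) (length ?xs)" unfolding T_def by simp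
  have Aic: "?Ai \<in> carrier_mat (length ?xs) n" by (rule strat_carrier)
  have si: "s i > 0" using spos i by simp
  have "A i = T * ?Ai"
  proof (rule eq_matI)
    fix j c assume j: "j < dim_row (T * ?Ai)" and c: "c < dim_col (T * ?Ai)"
    hence j: "j < dim_row (A i)" and c: "c < n" using Tc Aic by auto
    have "(T * ?Ai) $$ (j, c) = (\<Sum>k<length ?xs. T $$ (j, k) * ?Ai $$ (k, c))"
      using j c Tc Aic by (simp add: scalar_prod_def lessThan_atLeast0)
    also have "\<dots> = (\<Sum>k<length ?xs. T $$ (j, k) * (?f (?xs ! k) * (?xs ! k) $ c))"
      using strat_index[OF Ti _ c] by simp
    also have "\<dots> = A i $$ (j, c)"
    proof (cases "(i,j) \<in> ?I")
      case True
      let ?e = "?d (i,j)"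
      have "?e \<in> set ?xs" using True xsl_props(2)[OF Ti] unfolding wf_buckets_def by auto
      then obtain k0 where k0: "k0 < length ?xs" "?xs ! k0 = ?e" by (auto simp: in_set_conv_nth)
      have fpos: "?f ?e > 0" using weight_pos[OF Ti] \<open>?e \<in> set ?xs\<close> xsl_props(2)[OF Ti] by auto
      have "(\<Sum>k<length ?xs. T $$ (j, k) * (?f (?xs ! k) * (?xs ! k) $ c))
          = (\<Sum>k<length ?xs. if ?xs ! k = ?e then nrm (?v (i,j)) / (s i * ?f ?e) * (?f (?xs ! k) * (?xs ! k) $ c) else 0)"
        using True j by (intro sum.cong refl) (auto simp: T_def)
      also have "\<dots> = nrm (?v (i,j)) / (s i * ?f ?e) * (?f (?xs ! k0) * (?xs ! k0) $ c)"
        by (rule sum_nth_single'[OF xsl_props(1)[OF Ti] k0])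
      also have "\<dots> = nrm (?v (i,j)) * ?e $ c / s i" using k0 fpos si by (simp add: field_simps)
      also have "nrm (?v (i,j)) * ?e $ c = ?v (i,j) $ c"
        using idx_props(2)[OF Ti True] idx_props(3)[OF Ti True] c
        by (metis carrier_vecD index_smult_vec(1))
      also have "\<dots> = s i * A i $$ (j, c)" using wf_row_index[OF i j c] .
      finally show ?thesis using si by simp
    next
      case False
      hence "?v (i,j) = 0\<^sub>v n" using j unfolding wf_idx_def by auto
      hence "?v (i,j) $ c = 0" using c by simp
      hence Az: "A i $$ (j, c) = 0" using wf_row_index[OF i j c] si by simp
      have "(\<Sum>k<length ?xs. T $$ (j, k) * (?f (?xs ! k) * (?xs ! k) $ c)) = 0"
        using False j by (intro sum.neutral) (auto simp: T_def)
      thus ?thesis using Az by simp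
    qed
    finally show "A i $$ (j, c) = (T * ?Ai) $$ (j, c)" by simp
  qed (use Tc Aic dimA[OF i] in auto)
  thus ?thesis using Tc by blast
qed

lemma joint_factor:
  assumes i: "i \<in> S" and Z: "Z \<in> carrier_mat r (length (xsl {i}))"
  shows "\<exists>Y. Y \<in> carrier_mat r (length (xsl S)) \<and> Y * wf_strategy n nrm s A S = Z * wf_strategy n nrm s A {i}
     \<and> frob_sq Y \<le> frob_sq Z"
proof -
  have Ti: "{i} \<subseteq> S" using i by simp
  have TS: "S \<subseteq> S" by simp
  let ?xi = "xsl {i}"
  let ?xS = "xsl S"
  let ?fi = "wf_weight n nrm s A {i}"
  let ?fS = "wf_weight n nrm s A S"
  let ?Ai = "wf_strategy n nrm s A {i}"
  let ?AS = "wf_strategy n nrm s A S"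
  define ix where "ix = the_inv_into {..<length ?xi} (nth ?xi)"
  have inj: "inj_on (nth ?xi) {..<length ?xi}" by (rule inj_on_nth) (use xsl_props(1)[OF Ti] in auto)
  have ixk: "ix (?xi ! k) = k" if "k < length ?xi" for k
    unfolding ix_def using the_inv_into_f_f[OF inj] that by simp
  have sub: "set ?xi \<subseteq> set ?xS"
    unfolding xsl_props(2)[OF Ti] xsl_props(2)[OF TS] wf_buckets_def using idx_mono[OF Ti] by auto
  have fiS: "0 < ?fi e \<and> ?fi e \<le> ?fS e" if "e \<in> set ?xi" for e
    using weight_pos[OF Ti] weight_mono[OF Ti TS] that xsl_props(2)[OF Ti] by auto
  define Y where "Y = mat r (length ?xS) (\<lambda>(q,k). if ?xS ! k \<in> set ?xi then
       Z $$ (q, ix (?xS ! k)) * (?fi (?xS ! k) / ?fS (?xS ! k)) else 0)"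
  have Yc: "Y \<in> carrier_mat r (length ?xS)" unfolding Y_def by simp
  have ASc: "?AS \<in> carrier_mat (length ?xS) n" by (rule strat_carrier)
  have Aic: "?Ai \<in> carrier_mat (length ?xi) n" by (rule strat_carrier)
  have eq: "Y * ?AS = Z * ?Ai"
  proof (rule eq_matI)
    fix q c assume q: "q < dim_row (Z * ?Ai)" and c: "c < dim_col (Z * ?Ai)"
    hence q: "q < r" and c: "c < n" using Z Aic by auto
    define G where "G = (\<lambda>e. Z $$ (q, ix e) * (?fi e * e $ c))"
    have "(Y * ?AS) $$ (q, c) = (\<Sum>k<length ?xS. Y $$ (q, k) * ?AS $$ (k, c))"
      using q c Yc ASc by (simp add: scalar_prod_def lessThan_atLeast0)
    also have "\<dots> = (\<Sum>k<length ?xS. if ?xS ! k \<in> set ?xi then G (?xS ! k) else 0)"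
    proof (rule sum.cong)
      fix k assume k: "k \<in> {..<length ?xS}"
      show "Y $$ (q, k) * ?AS $$ (k, c) = (if ?xS ! k \<in> set ?xi then G (?xS ! k) else 0)"
      proof (cases "?xS ! k \<in> set ?xi")
        case True
        have "?fS (?xS ! k) > 0" using fiS[OF True] by simp
        thus ?thesis using True k q c strat_index[OF TS _ c, of k] by (simp add: Y_def G_def field_simps)
      qed (use k q in \<open>simp add: Y_def\<close>)
    qed simp
    also have "\<dots> = (\<Sum>k<length ?xi. G (?xi ! k))"
      by (rule sum_nth_sub[OF xsl_props(1)[OF Ti] xsl_props(1)[OF TS] sub])
    also have "\<dots> = (\<Sum>k<length ?xi. Z $$ (q, k) * ?Ai $$ (k, c))"
      using ixk strat_index[OF Ti _ c] by (intro sum.cong refl) (simp add: G_def)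
    also have "\<dots> = (Z * ?Ai) $$ (q, c)"
      using q c Z Aic by (simp add: scalar_prod_def lessThan_atLeast0)
    finally show "(Y * ?AS) $$ (q, c) = (Z * ?Ai) $$ (q, c)" .
  qed (use Yc ASc Z Aic in auto)
  have "frob_sq Y = (\<Sum>q<r. \<Sum>k<length ?xS. (Y $$ (q, k))\<^sup>2)" unfolding frob_sq_def using Yc by simp
  also have "\<dots> \<le> (\<Sum>q<r. \<Sum>k<length ?xS. if ?xS ! k \<in> set ?xi then (Z $$ (q, ix (?xS ! k)))\<^sup>2 else 0)"
  proof (intro sum_mono)
    fix q k assume q: "q \<in> {..<r}" and k: "k \<in> {..<length ?xS}"
    show "(Y $$ (q, k))\<^sup>2 \<le> (if ?xS ! k \<in> set ?xi then (Z $$ (q, ix (?xS ! k)))\<^sup>2 else 0)"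
    proof (cases "?xS ! k \<in> set ?xi")
      case True
      let ?t = "?fi (?xS ! k) / ?fS (?xS ! k)"
      have t: "0 \<le> ?t" "?t \<le> 1" using fiS[OF True] by auto
      have "?t\<^sup>2 \<le> 1" using t by (simp add: power_le_one)
      hence ineq: "(Z $$ (q, ix (?xS ! k)))\<^sup>2 * ?t\<^sup>2 \<le> (Z $$ (q, ix (?xS ! k)))\<^sup>2"
        by (simp add: mult_left_le)
      have "(Y $$ (q,k))\<^sup>2 = (Z $$ (q, ix (?xS ! k)) * ?t)\<^sup>2" using True q k by (simp add: Y_def)
      also have "\<dots> = (Z $$ (q, ix (?xS ! k)))\<^sup>2 * ?t\<^sup>2" by (rule power_mult_distrib)
      finally show ?thesis using True ineq by simp
    qed (use q k in \<open>simp add: Y_def\<close>)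
  qed
  also have "\<dots> = (\<Sum>q<r. \<Sum>k<length ?xi. (Z $$ (q, ix (?xi ! k)))\<^sup>2)"
    by (intro sum.cong refl sum_nth_sub[OF xsl_props(1)[OF Ti] xsl_props(1)[OF TS] sub])
  also have "\<dots> = frob_sq Z" unfolding frob_sq_def using Z ixk by simp
  finally show ?thesis using Yc eq by blast
qed

end

theorem mainTheorem2:
  fixes n :: nat and nrm :: "real vec \<Rightarrow> real" and \<epsilon> :: real
    and W A :: "'a \<Rightarrow> real mat" and s :: "'a \<Rightarrow> real"
    and S :: "'a set" and i :: 'a
  assumes "\<epsilon> > 0"
    and "is_norm_on n nrm"
    and "finite S" and "S \<noteq> {}" and "i \<in> S"
    and "\<And>l. l \<in> S \<Longrightarrow> s l > 0"
    and "\<And>l. l \<in> S \<Longrightarrow> dim_col (W l) = n"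
    and "\<And>l. l \<in> S \<Longrightarrow> dim_col (A l) = n"
    and "\<And>l. l \<in> S \<Longrightarrow> W l = W l * pinv (A l) * A l"
    and "\<And>l j. l \<in> S \<Longrightarrow> j < n \<Longrightarrow> col_l1 (A l) j = 1"
  shows "wf_err n nrm \<epsilon> W s A i S \<le> wf_err n nrm \<epsilon> W s A i {i}"
proof -
  note eps = assms(1) and norm = assms(2) and fin = assms(3) and i = assms(5) and spos = assms(6)
    and dimW = assms(7) and dimA = assms(8) and hyp = assms(9) and one = assms(10)
  let ?Ai = "wf_strategy n nrm s A {i}"
  let ?AS = "wf_strategy n nrm s A S"
  show ?thesis
  proof (cases "n = 0")
    case True
    have "norm1 M = 0" if "dim_col M = 0" for M unfolding norm1_def using that by simp
    moreover have "dim_col ?Ai = 0" "dim_col ?AS = 0"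
      unfolding wf_strategy_def using True by simp_all
    ultimately show ?thesis unfolding wf_err_def by simp
  next
    case False
    hence n: "n > 0" by simp
    have Ti: "{i} \<subseteq> S" using i by simp
    have nS: "norm1 ?AS = (\<Sum>l\<in>S. s l)"
      by (rule norm1_strat[where n=n and nrm=nrm and s=s and A=A and S=S, OF norm fin spos dimA _ n]) (use one in auto)
    have ni: "norm1 ?Ai = (\<Sum>l\<in>{i}. s l)"
      by (rule norm1_strat[where n=n and nrm=nrm and s=s and A=A and S=S, OF norm fin spos dimA Ti n]) (use one i in auto)
    have sS: "(\<Sum>l\<in>S. s l) > 0" using spos fin assms(4) by (simp add: sum_pos)
    have si: "(\<Sum>l\<in>{i}. s l) > 0" using spos i by simp
    have errS: "wf_err n nrm \<epsilon> W s A i S = 2 / \<epsilon>\<^sup>2 * frob_sq (W i * pinv ?AS)"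
      unfolding wf_err_def Let_def nS using sS eps by (simp add: power_mult_distrib)
    have erri: "wf_err n nrm \<epsilon> W s A i {i} = 2 / \<epsilon>\<^sup>2 * frob_sq (W i * pinv ?Ai)"
      unfolding wf_err_def Let_def ni using si eps by (simp add: power_mult_distrib)
    define rW where "rW = dim_row (W i)"
    have Wc: "W i \<in> carrier_mat rW n" unfolding rW_def using dimW[OF i] by auto
    have Ac: "A i \<in> carrier_mat (dim_row (A i)) n" using dimA[OF i] by auto
    obtain T where Tc: "T \<in> carrier_mat (dim_row (A i)) (length (xsl n nrm s A {i}))"
      and AT: "A i = T * ?Ai"
      using single_factor[where n=n and nrm=nrm and s=s and A=A and S=S, OF norm fin spos dimA i] by blast
    have Aic: "?Ai \<in> carrier_mat (length (xsl n nrm s A {i})) n"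
      by (rule strat_carrier[where n=n and nrm=nrm and s=s and A=A and S=S, OF norm fin spos dimA])
    have ASc: "?AS \<in> carrier_mat (length (xsl n nrm s A S)) n"
      by (rule strat_carrier[where n=n and nrm=nrm and s=s and A=A and S=S, OF norm fin spos dimA])
    define V where "V = W i * pinv (A i)"
    have Vc: "V \<in> carrier_mat rW (dim_row (A i))" unfolding V_def using Wc pinv_carrier[of "A i"] dimA[OF i] by auto
    have "W i = V * (T * ?Ai)" using hyp[OF i] AT unfolding V_def by simp
    also have "\<dots> = (V * T) * ?Ai" using assoc_mult_mat[OF Vc Tc Aic] by simp
    finally have WVT: "W i = (V * T) * ?Ai" .
    define Z where "Z = W i * pinv ?Ai"
    have Zc: "Z \<in> carrier_mat rW (length (xsl n nrm s A {i}))"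
      unfolding Z_def using Wc pinv_carrier[of ?Ai] Aic by auto
    have ZA: "Z * ?Ai = W i" unfolding Z_def
      by (rule pinv_reproduce[OF Aic _ WVT]) (use Vc Tc in auto)
    obtain Y where Yc: "Y \<in> carrier_mat rW (length (xsl n nrm s A S))"
      and YA: "Y * ?AS = Z * ?Ai" and YZ: "frob_sq Y \<le> frob_sq Z"
      using joint_factor[where n=n and nrm=nrm and s=s and A=A and S=S, OF norm fin spos dimA i Zc] by blast
    have "frob_sq (W i * pinv ?AS) \<le> frob_sq Y"
      by (rule min_norm[OF ASc Yc]) (use YA ZA in simp)
    hence "frob_sq (W i * pinv ?AS) \<le> frob_sq (W i * pinv ?Ai)" using YZ unfolding Z_def by simp
    hence "2 / \<epsilon>\<^sup>2 * frob_sq (W i * pinv ?AS) \<le> 2 / \<epsilon>\<^sup>2 * frob_sq (W i * pinv ?Ai)"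
      by (rule mult_left_mono) simp
    thus ?thesis unfolding errS erri .
  qed
qed

end
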